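(* Given a set of $n_0$ points in $\mathbb{R}^1$, one can maintain a unimax coloring of the current point set with respect to intervals under deletions, using $\lceil\log n_0\rceil$ colors and at the cost of one recoloring per deletion.
   Context: A coloring of a finite point set $P\subset\mathbb{R}$ by integers is unimax with respect to intervals if for every interval $I$ containing at least one point of $P$, the maximum color among the points of $P\cap I$ is attained by exactly one point. A recoloring is a change of color of one remaining point. *)

theory Defs
  imports Complex_Main
begin

definition real_interval :: "real set \<Rightarrow> bool" where
  "real_interval I \<longleftrightarrow> (\<forall>x\<in>I. \<forall>z\<in>I. \<forall>y. x \<le> y \<and> y \<le> z \<longrightarrow> y \<in> I)"

definition unimax_intervals :: "real set \<Rightarrow> (real \<Rightarrow> int) \<Rightarrow> bool" where
  "unimax_intervals P c \<longleftrightarrow>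
     (\<forall>I. real_interval I \<and> P \<inter> I \<noteq> {} \<longrightarrow>
        card {p \<in> P \<inter> I. c p = Max (c ` (P \<inter> I))} = 1)"

end

theory Submission
  imports Defs
begin

definition goodc :: "real set \<Rightarrow> (real \<Rightarrow> int) \<Rightarrow> bool" where
  "goodc Q c \<longleftrightarrow> (\<forall>a\<in>Q. \<forall>b\<in>Q. a < b \<and> c a = c b \<longrightarrow> (\<exists>x\<in>Q. a < x \<and> x < b \<and> c a < c x))"

lemma unimax_good:
  assumes "finite Q" "unimax_intervals Q c"
  shows "goodc Q c"
  unfolding goodc_def
proof (intro ballI impI)
  fix a b assume ab: "a \<in> Q" "b \<in> Q" "a < b \<and> c a = c b"
  let ?I = "{a..b}"
  have iv: "real_interval ?I" unfolding real_interval_def by auto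
  have ne: "Q \<inter> ?I \<noteq> {}" using ab by auto
  have fin: "finite (Q \<inter> ?I)" using assms(1) by auto
  let ?M = "Max (c ` (Q \<inter> ?I))"
  have c1: "card {p \<in> Q \<inter> ?I. c p = ?M} = 1"
    using assms(2) iv ne unfolding unimax_intervals_def by blast
  have "c a \<le> ?M" using fin ab by auto
  moreover have "c a \<noteq> ?M"
  proof
    assume h: "c a = ?M"
    have "{a, b} \<subseteq> {p \<in> Q \<inter> ?I. c p = ?M}" using ab h by auto
    moreover have "finite {p \<in> Q \<inter> ?I. c p = ?M}" using assms(1) by simp
    ultimately have "card {a,b} \<le> card {p \<in> Q \<inter> ?I. c p = ?M}"
      using card_mono by blast
    thus False using c1 ab by auto
  qed
  ultimately have lt: "c a < ?M" by simp
  have "?M \<in> c ` (Q \<inter> ?I)" using fin ne by (intro Max_in) auto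
  then obtain x where x: "x \<in> Q" "a \<le> x" "x \<le> b" "c x = ?M" by auto
  have "x \<noteq> a" "x \<noteq> b" using x lt ab by auto
  thus "\<exists>x\<in>Q. a < x \<and> x < b \<and> c a < c x" using x lt by (intro bexI[of _ x]) auto
qed

lemma good_unimax:
  assumes "finite Q" "goodc Q c"
  shows "unimax_intervals Q c"
  unfolding unimax_intervals_def
proof (intro allI impI)
  fix I assume h: "real_interval I \<and> Q \<inter> I \<noteq> {}"
  have fin: "finite (Q \<inter> I)" using assms(1) by auto
  let ?M = "Max (c ` (Q \<inter> I))"
  let ?A = "{p \<in> Q \<inter> I. c p = ?M}"
  have "?M \<in> c ` (Q \<inter> I)" using fin h by (intro Max_in) auto
  then obtain a where a: "a \<in> ?A" by auto
  have eq: "x = y" if "x \<in> ?A" "y \<in> ?A" for x y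
  proof (rule ccontr)
    assume ne: "x \<noteq> y"
    have key: "False" if ku: "u \<in> ?A" "v \<in> ?A" and kl: "u < v" for u v
    proof -
      have uv: "u \<in> Q" "v \<in> Q" "c u = c v" "u \<in> I" "v \<in> I" using ku by auto
      obtain z where z: "z \<in> Q" "u < z" "z < v" "c u < c z"
        using assms(2) uv kl unfolding goodc_def by blast
      have ri: "\<forall>x\<in>I. \<forall>z\<in>I. \<forall>y. x \<le> y \<and> y \<le> z \<longrightarrow> y \<in> I"
        using h unfolding real_interval_def by blast
      have "u \<le> z" "z \<le> v" using z by auto
      hence "z \<in> I" using ri uv by blast
      hence "c z \<le> ?M" using fin z by auto
      thus False using z uv ku by auto
    qed
    show False using ne key[of x y] key[of y x] that by linarith
  qed
  have "?A = {a}" using a eq by blast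
  thus "card ?A = 1" by simp
qed

lemma rank_exists:
  fixes P :: "real set"
  assumes "finite P" "i < card P"
  shows "\<exists>m\<in>P. card {p\<in>P. p < m} = i"
proof -
  let ?f = "\<lambda>m. card {p\<in>P. p < m}"
  have inj: "inj_on ?f P"
  proof (rule inj_onI)
    fix x y assume xy: "x \<in> P" "y \<in> P" "?f x = ?f y"
    show "x = y"
    proof (rule ccontr)
      assume "x \<noteq> y"
      hence "x < y \<or> y < x" by auto
      thus False
      proof
        assume "x < y"
        hence "{p\<in>P. p < x} \<subset> {p\<in>P. p < y}" using xy by auto
        hence "?f x < ?f y" using assms(1) by (intro psubset_card_mono) auto
        thus False using xy by simp
      next
        assume "y < x"
        hence "{p\<in>P. p < y} \<subset> {p\<in>P. p < x}" using xy by auto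
        hence "?f y < ?f x" using assms(1) by (intro psubset_card_mono) auto
        thus False using xy by simp
      qed
    qed
  qed
  have sub: "?f ` P \<subseteq> {..<card P}"
  proof
    fix k assume "k \<in> ?f ` P"
    then obtain m where m: "m \<in> P" "k = ?f m" by auto
    have "{p\<in>P. p < m} \<subset> P" using m by auto
    hence "?f m < card P" using assms(1) by (intro psubset_card_mono) auto
    thus "k \<in> {..<card P}" using m by simp
  qed
  have "card (?f ` P) = card {..<card P}" using card_image[OF inj] by simp
  hence "?f ` P = {..<card P}" using sub by (intro card_subset_eq) auto
  thus ?thesis using assms(2) by (metis (no_types, lifting) imageE lessThan_iff)
qed

lemma exists_good:
  "finite P \<Longrightarrow> card P < 2^k \<Longrightarrow> \<exists>c. goodc P c \<and> c ` P \<subseteq> {1..int k}"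
proof (induction k arbitrary: P)
  case 0
  hence "P = {}" by simp
  thus ?case unfolding goodc_def by auto
next
  case (Suc k P)
  show ?case
  proof (cases "P = {}")
    case True
    thus ?thesis unfolding goodc_def by auto
  next
    case False
    define N where "N = card P"
    have Npos: "N > 0" using False Suc.prems N_def by auto
    have "(N - 1) div 2 < card P" using Npos N_def by simp
    then obtain m where m: "m \<in> P" "card {p\<in>P. p < m} = (N - 1) div 2"
      using rank_exists[OF Suc.prems(1), of "(N - 1) div 2"] by blast
    define A where "A = {p\<in>P. p < m}"
    define B where "B = {p\<in>P. m < p}"
    have PA: "P = A \<union> B \<union> {m}" using m unfolding A_def B_def by auto
    have cardP: "N = card A + card B + 1"
    proof -
      have "card (A \<union> B \<union> {m}) = card (A \<union> B) + card {m}"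
        by (rule card_Un_disjoint) (auto simp: A_def B_def Suc.prems(1))
      moreover have "card (A \<union> B) = card A + card B"
        by (rule card_Un_disjoint) (auto simp: A_def B_def Suc.prems(1))
      ultimately show ?thesis using PA N_def by simp
    qed
    have cA: "card A = (N - 1) div 2" using m A_def by simp
    have N2: "N < 2 * 2^k" using Suc.prems N_def by simp
    have ab: "card A < 2^k \<and> card B < 2^k"
    proof -
      obtain t :: nat where t: "t = 2^k" by simp
      have "card A < t \<and> card B < t" using cA cardP N2 t div_mult_mod_eq[of "N - 1" 2] mod_less_divisor[of 2 "N - 1"] by linarith
      thus ?thesis using t by simp
    qed
    have finA: "finite A" "finite B" using Suc.prems(1) A_def B_def by auto
    obtain cA' where hA: "goodc A cA'" "cA' ` A \<subseteq> {1..int k}" using Suc.IH[OF finA(1)] ab by blast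
    obtain cB' where hB: "goodc B cB'" "cB' ` B \<subseteq> {1..int k}" using Suc.IH[OF finA(2)] ab by blast
    define c where "c = (\<lambda>x. if x < m then cA' x else if x = m then int (Suc k) else cB' x)"
    have cAe: "c x = cA' x" if "x \<in> A" for x using that A_def c_def by simp
    have cBe: "c x = cB' x" if "x \<in> B" for x using that B_def c_def by simp
    have cm: "c m = int (Suc k)" using c_def by simp
    have inAB: "x \<in> A \<or> x \<in> B \<or> x = m" if "x \<in> P" for x using that PA by blast
    have lowA: "1 \<le> c x \<and> c x \<le> int k" if "x \<in> A \<union> B" for x
    proof (cases "x \<in> A")
      case True
      hence "cA' x \<in> {1..int k}" using hA(2) by blast
      thus ?thesis using cAe[OF True] by simp
    next
      case False
      hence xB: "x \<in> B" using that by blast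
      hence "cB' x \<in> {1..int k}" using hB(2) by blast
      thus ?thesis using cBe[OF xB] by simp
    qed
    have rng: "c ` P \<subseteq> {1..int (Suc k)}"
    proof
      fix y assume "y \<in> c ` P"
      then obtain x where x: "x \<in> P" "y = c x" by blast
      show "y \<in> {1..int (Suc k)}"
      proof (cases "x = m")
        case True thus ?thesis using x cm by simp
      next
        case False
        hence "x \<in> A \<union> B" using inAB[OF x(1)] by blast
        thus ?thesis using lowA x by force
      qed
    qed
    have mnot: "m \<notin> A \<union> B" using A_def B_def by blast
    have "goodc P c"
      unfolding goodc_def
    proof (intro ballI impI)
      fix a b assume ab: "a \<in> P" "b \<in> P" "a < b \<and> c a = c b"
      show "\<exists>x\<in>P. a < x \<and> x < b \<and> c a < c x"
      proof (cases "a = m \<or> b = m")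
        case True
        hence "a \<in> A \<union> B \<or> b \<in> A \<union> B" using ab inAB by blast
        then have False using True ab lowA[of a] lowA[of b] cm mnot by auto
        thus ?thesis ..
      next
        case nm: False
        have aAB: "a \<in> A \<or> a \<in> B" "b \<in> A \<or> b \<in> B" using nm ab inAB by blast+
        show ?thesis
        proof (cases "b \<in> A")
          case bA: True
          have aA: "a \<in> A" using aAB(1) bA ab unfolding A_def B_def by auto
          have "cA' a = cA' b" using ab cAe aA bA by simp
          then obtain x where x: "x \<in> A" "a < x" "x < b" "cA' a < cA' x"
            using hA(1) ab aA bA unfolding goodc_def by blast
          have "x \<in> P" using x(1) A_def by simp
          thus ?thesis using x cAe aA by (intro bexI[of _ x]) auto
        next
          case F1: False
          hence bB: "b \<in> B" using aAB by blast
          show ?thesis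
          proof (cases "a \<in> A")
            case True
            have "a < m" "m < b" using True bB A_def B_def by auto
            moreover have "c a < c m" using lowA[of a] True cm by simp
            ultimately show ?thesis using m(1) by (intro bexI[of _ m]) auto
          next
            case False
            hence aB: "a \<in> B" using aAB by blast
            have "cB' a = cB' b" using ab cBe aB bB by simp
            then obtain x where x: "x \<in> B" "a < x" "x < b" "cB' a < cB' x"
              using hB(1) ab aB bB unfolding goodc_def by blast
            have "x \<in> P" using x(1) B_def by simp
            thus ?thesis using x cBe aB by (intro bexI[of _ x]) auto
          qed
        qed
      qed
    qed
    thus ?thesis using rng by blast
  qed
qed


lemma delete_step:
  assumes fin: "finite Q" and g: "goodc Q c" and qQ: "q \<in> Q"
  shows "\<exists>c'. goodc (Q - {q}) c' \<and> card {p \<in> Q - {q}. c' p \<noteq> c p} \<le> 1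
           \<and> (\<forall>p\<in>Q - {q}. c' p \<in> c ` Q)"
proof (cases "{p\<in>Q. p < q} = {}")
  case True
  have "goodc (Q - {q}) c"
    unfolding goodc_def
  proof (intro ballI impI)
    fix a b assume ab: "a \<in> Q - {q}" "b \<in> Q - {q}" "a < b \<and> c a = c b"
    then obtain x where x: "x \<in> Q" "a < x" "x < b" "c a < c x" using g unfolding goodc_def by blast
    have "x \<noteq> q" using True x ab by auto
    thus "\<exists>x\<in>Q - {q}. a < x \<and> x < b \<and> c a < c x" using x by blast
  qed
  thus ?thesis by (intro exI[of _ c]) auto
next
  case False
  define L where "L = {p\<in>Q. p < q}"
  have finL: "finite L" using fin L_def by simp
  have Lne: "L \<noteq> {}" using False L_def by simp
  define u where "u = Max L"
  have uL: "u \<in> L" using finL Lne u_def by simp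
  have uQ: "u \<in> Q" "u < q" using uL L_def by auto
  have umax: "p \<le> u" if "p \<in> Q" "p < q" for p using that finL L_def u_def by simp
  define c' where "c' = c(u := max (c u) (c q))"
  have ge: "c p \<le> c' p" for p using c'_def by simp
  have ne: "c' p = c p" if "p \<noteq> u" for p using that c'_def by simp
  have cu: "c' u = max (c u) (c q)" using c'_def by simp
  have good: "goodc (Q - {q}) c'"
    unfolding goodc_def
  proof (intro ballI impI)
    fix a b assume ab: "a \<in> Q - {q}" "b \<in> Q - {q}" "a < b \<and> c' a = c' b"
    have aQ: "a \<in> Q" "a \<noteq> q" "b \<in> Q" "b \<noteq> q" using ab by auto
    show "\<exists>x\<in>Q - {q}. a < x \<and> x < b \<and> c' a < c' x"
    proof (cases "a = u")
      case au: True
      have bq: "q < b"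
      proof (rule ccontr)
        assume "\<not> q < b"
        hence "b < q" using aQ by auto
        hence "b \<le> u" using umax aQ by simp
        thus False using ab au by simp
      qed
      have cb: "c b = max (c u) (c q)" using ab au cu ne[of b] by simp
      show ?thesis
      proof (cases "c q \<le> c u")
        case True
        hence "c u = c b" using cb by simp
        then obtain x where x: "x \<in> Q" "u < x" "x < b" "c u < c x"
          using g uQ aQ bq unfolding goodc_def by (metis ab au)
        have "x \<noteq> q" using x True by auto
        moreover have "x \<noteq> u" using x by simp
        ultimately show ?thesis using x au cu True ne[of x] by (intro bexI[of _ x]) auto
      next
        case False
        hence "c q = c b" using cb by simp
        then obtain x where x: "x \<in> Q" "q < x" "x < b" "c q < c x"
          using g qQ aQ bq unfolding goodc_def by blast
        have "x \<noteq> q" "x \<noteq> u" using x uQ by auto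
        thus ?thesis using x au cu False ne[of x] uQ by (intro bexI[of _ x]) auto
      qed
    next
      case anu: False
      show ?thesis
      proof (cases "b = u")
        case bu: True
        have ca: "c a = max (c u) (c q)" using ab bu cu ne[of a] anu by simp
        show ?thesis
        proof (cases "c q \<le> c u")
          case True
          hence "c a = c u" using ca by simp
          then obtain x where x: "x \<in> Q" "a < x" "x < u" "c a < c x"
            using g uQ aQ ab bu unfolding goodc_def by blast
          have "x \<noteq> q" using x uQ by auto
          moreover have "x \<noteq> u" using x by simp
          ultimately show ?thesis using x bu ne[of x] ne[of a] anu by (intro bexI[of _ x]) auto
        next
          case False
          hence "c a = c q" using ca by simp
          moreover have "a < q" using ab bu uQ by simp
          ultimately obtain x where x: "x \<in> Q" "a < x" "x < q" "c a < c x"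
            using g qQ aQ unfolding goodc_def by blast
          have "x \<noteq> u" using x False \<open>c a = c q\<close> by auto
          moreover have "x \<le> u" using umax x by simp
          moreover have "x \<noteq> q" using x by simp
          ultimately show ?thesis using x bu ne[of x] ne[of a] anu \<open>c a = c q\<close> \<open>a < q\<close>
            by (intro bexI[of _ x]) auto
        qed
      next
        case bnu: False
        have "c a = c b" using ab ne[of a] ne[of b] anu bnu by simp
        then obtain x where x: "x \<in> Q" "a < x" "x < b" "c a < c x"
          using g aQ ab unfolding goodc_def by blast
        show ?thesis
        proof (cases "x = q")
          case False
          thus ?thesis using x ge[of x] ne[of a] anu by (intro bexI[of _ x]) auto
        next
          case True
          have "a \<le> u" using umax aQ x True by simp
          hence au: "a < u" using anu by simp
          have "c' a < c' u" using cu ne[of a] anu x True by simp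
          thus ?thesis using au uQ x True by (intro bexI[of _ u]) auto
        qed
      qed
    qed
  qed
  have "{p \<in> Q - {q}. c' p \<noteq> c p} \<subseteq> {u}" using ne by blast
  hence "card {p \<in> Q - {q}. c' p \<noteq> c p} \<le> card {u}" by (intro card_mono) auto
  moreover have "\<forall>p\<in>Q - {q}. c' p \<in> c ` Q"
  proof
    fix p assume p: "p \<in> Q - {q}"
    show "c' p \<in> c ` Q"
    proof (cases "p = u")
      case True thus ?thesis using cu uQ qQ by (simp add: max_def)
    next
      case False thus ?thesis using ne p by simp
    qed
  qed
  ultimately show ?thesis using good by (intro exI[of _ c']) auto
qed

theorem mainTheorem12:
  fixes P :: "real set"
  assumes "finite P"
  shows "\<exists>S :: (real set \<times> (real \<Rightarrow> int)) set.
     (\<exists>c0. (P, c0) \<in> S) \<and>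
     (\<forall>(Q, c) \<in> S. Q \<subseteq> P \<and> unimax_intervals Q c \<and>
        c ` Q \<subseteq> {1 .. \<lceil>log 2 (real (card P) + 1)\<rceil>}) \<and>
     (\<forall>(Q, c) \<in> S. \<forall>q \<in> Q. \<exists>c'. (Q - {q}, c') \<in> S \<and>
        card {p \<in> Q - {q}. c' p \<noteq> c p} \<le> 1)"
proof -
  define K where "K = \<lceil>log 2 (real (card P) + 1)\<rceil>"
  have "0 \<le> log 2 (real (card P) + 1)" by (subst zero_le_log_cancel_iff) auto
  hence K0: "0 \<le> K" unfolding K_def by linarith
  define k where "k = nat K"
  have kK: "int k = K" using K0 k_def by simp
  have "log 2 (real (card P) + 1) \<le> real k" using kK K_def
    by (metis le_of_int_ceiling of_int_of_nat_eq)
  hence "2 powr log 2 (real (card P) + 1) \<le> 2 powr real k" by (rule powr_mono) auto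
  moreover have "2 powr log 2 (real (card P) + 1) = real (card P) + 1"
    by (rule powr_log_cancel) auto
  ultimately have "real (card P) + 1 \<le> 2 ^ k" by (simp add: powr_realpow)
  hence "card P + 1 \<le> 2 ^ k" by (metis of_nat_1 of_nat_add of_nat_le_iff of_nat_numeral of_nat_power)
  hence "card P < 2 ^ k" by simp
  then obtain c0 where c0: "goodc P c0" "c0 ` P \<subseteq> {1..int k}" using exists_good[OF assms] by blast
  define S where "S = {(Q, c). Q \<subseteq> P \<and> goodc Q c \<and> c ` Q \<subseteq> {1..K}}"
  have 1: "(P, c0) \<in> S" using c0 kK S_def by simp
  have 2: "\<forall>(Q, c) \<in> S. Q \<subseteq> P \<and> unimax_intervals Q c \<and> c ` Q \<subseteq> {1..K}"
    using good_unimax assms finite_subset unfolding S_def by blast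
  have 3: "\<forall>(Q, c) \<in> S. \<forall>q \<in> Q. \<exists>c'. (Q - {q}, c') \<in> S \<and> card {p \<in> Q - {q}. c' p \<noteq> c p} \<le> 1"
  proof (intro ballI, clarify)
    fix Q c q assume QS: "(Q, c) \<in> S" and q: "q \<in> Q"
    have h: "Q \<subseteq> P" "goodc Q c" "c ` Q \<subseteq> {1..K}" using QS S_def by auto
    have fQ: "finite Q" using h(1) assms finite_subset by blast
    obtain c' where c': "goodc (Q - {q}) c'" "card {p \<in> Q - {q}. c' p \<noteq> c p} \<le> 1"
      "\<forall>p\<in>Q - {q}. c' p \<in> c ` Q" using delete_step[OF fQ h(2) q] by blast
    have "c' ` (Q - {q}) \<subseteq> {1..K}" using c'(3) h(3) by blast
    hence "(Q - {q}, c') \<in> S" using c'(1) h(1) S_def by auto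
    thus "\<exists>c'. (Q - {q}, c') \<in> S \<and> card {p \<in> Q - {q}. c' p \<noteq> c p} \<le> 1" using c'(2) by blast
  qed
  show ?thesis using 1 2 3 unfolding K_def by blast
qed

end
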